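(* Let $k\geq 1$ and $K=J(2k+1,4)$, with Riley polynomial $\phi_K(x,y)=\lambda_k(x,y)\,\alpha_k(x,y)-1$ for the presentation $\langle a,b\mid w^2a=bw^2\rangle$, $w=(ba^{-1})^kba(b^{-1}a)^k$. Then for every $n\geq 5$, the polynomial $\phi_K(2\cos(\pi/n),y)$ has a real root $y_n>2$.
   Context: $S_n$ are the Chebyshev polynomials $S_0=1$, $S_1=z$, $S_{n+1}=zS_n-S_{n-1}$. $\lambda_k(x,y)=x^2-y-(y-2)(y+2-x^2)S_k(y)S_{k-1}(y)$ and $\alpha_k(x,y)=1+(y+2-x^2)S_{k-1}(y)\big(S_k(y)-S_{k-1}(y)\big)$. *)

theory Defs
  imports Complex_Main
begin

fun chebS :: "nat \<Rightarrow> real \<Rightarrow> real" where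
  "chebS 0 z = 1"
| "chebS (Suc 0) z = z"
| "chebS (Suc (Suc n)) z = z * chebS (Suc n) z - chebS n z"

definition lambdaK :: "nat \<Rightarrow> real \<Rightarrow> real \<Rightarrow> real" where
  "lambdaK k x y = x^2 - y - (y - 2) * (y + 2 - x^2) * chebS k y * chebS (k - 1) y"

definition alphaK :: "nat \<Rightarrow> real \<Rightarrow> real \<Rightarrow> real" where
  "alphaK k x y = 1 + (y + 2 - x^2) * chebS (k - 1) y * (chebS k y - chebS (k - 1) y)"

definition rileyJ :: "nat \<Rightarrow> real \<Rightarrow> real \<Rightarrow> real" where
  "rileyJ k x y = lambdaK k x y * alphaK k x y - 1"

end

theory Submission
  imports Defs "HOL-Analysis.Analysis"
begin

lemma chebS_big: "y \<ge> 3 \<Longrightarrow> chebS n y \<ge> 1 \<and> chebS (Suc n) y - chebS n y \<ge> 1"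
proof (induction n)
  case 0 then show ?case by simp
next
  case (Suc n)
  then have a: "chebS n y \<ge> 1" and b: "chebS (Suc n) y - chebS n y \<ge> 1" by auto
  have c: "chebS (Suc n) y \<ge> 1" using a b by linarith
  have "chebS (Suc (Suc n)) y - chebS (Suc n) y = (y - 2) * chebS (Suc n) y + (chebS (Suc n) y - chebS n y)"
    by (simp add: algebra_simps)
  moreover have "(y - 2) * chebS (Suc n) y \<ge> 0" using Suc.prems c by simp
  ultimately show ?case using b c by linarith
qed

lemma chebS_cont2: "continuous_on A (chebS n) \<and> continuous_on A (chebS (Suc n))"
proof (induction n)
  case 0 then show ?case by (auto intro!: continuous_intros)
next
  case (Suc n)
  then have "continuous_on A (\<lambda>z. z * chebS (Suc n) z - chebS n z)"
    by (auto intro!: continuous_intros)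
  then show ?case using Suc by simp
qed

lemma chebS_cont: "continuous_on A (chebS n)" using chebS_cont2 by blast

lemma chebS_22: "chebS n 2 = real n + 1 \<and> chebS (Suc n) 2 = real n + 2"
  by (induction n) (auto simp: algebra_simps)

lemma chebS_2: "chebS n 2 = real n + 1" using chebS_22 by blast

theorem proposition5p2:
  fixes k n :: nat
  assumes "k \<ge> 1" and "n \<ge> 5"
  shows "\<exists>y::real. y > 2 \<and> rileyJ k (2 * cos (pi / real n)) y = 0"
proof -
  define x where "x = 2 * cos (pi / real n)"
  define t where "t = x^2"
  define w where "w = pi / real n / 2"
  have w0: "w \<ge> 0" unfolding w_def by simp
  have wle: "w \<le> 3.15 / 10" unfolding w_def using pi_approx assms(2)
    by (simp add: divide_simps)
  have sw: "sin w \<le> w" using sin_x_le_x w0 by simp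
  have sw0: "sin w \<ge> 0" using w0 wle pi_approx by (intro sin_ge_zero) auto
  have "sin w ^ 2 \<le> w ^ 2" using sw sw0 by (simp add: power_mono)
  also have "\<dots> \<le> (3.15/10)^2" using w0 wle by (simp add: power_mono)
  finally have s2: "sin w ^ 2 \<le> (3.15/10)^2" .
  have cw: "cos (pi / real n) = 1 - 2 * sin w ^ 2"
    using cos_double_sin[of w] unfolding w_def by simp
  have cl: "cos (pi / real n) \<ge> 0.8" using cw s2 by (simp add: power2_eq_square)
  have cu: "cos (pi / real n) < 1"
  proof -
    have "0 < pi / real n" using assms(2) by simp
    moreover have "pi / real n < pi" using assms(2) pi_gt_zero by (simp add: divide_simps)
    ultimately have "cos (pi / real n) < cos 0"
      by (intro cos_monotone_0_pi) auto
    then show ?thesis by simp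
  qed
  have tl: "t \<ge> 2.56" unfolding t_def x_def
  proof -
    have "(0.8::real)^2 \<le> cos (pi / real n) ^ 2" using cl by (intro power_mono) auto
    then show "2.56 \<le> (2 * cos (pi / real n))^2" by (simp add: power_mult_distrib power2_eq_square)
  qed
  have tu: "t < 4" unfolding t_def x_def
  proof -
    have "cos (pi / real n) ^ 2 < 1^2" using cl cu by (intro power_strict_mono) auto
    then show "(2 * cos (pi / real n))^2 < 4" by (simp add: power_mult_distrib)
  qed
  define f where "f = rileyJ k x"
  have f2: "f 2 > 0"
  proof -
    have e: "f 2 = (t - 2) * (1 + real k * (4 - t)) - 1"
      unfolding f_def rileyJ_def lambdaK_def alphaK_def t_def using assms(1)
      by (simp add: chebS_2 algebra_simps)
    have m1: "(t - 2) * (1 + real k * (4 - t)) \<ge> (t - 2) * (1 + 1 * (4 - t))"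
      using tl tu assms(1) by (intro mult_left_mono add_left_mono mult_right_mono) auto
    have "(t - 2.56) * (4 - t) \<ge> 0" using tl tu by simp
    moreover have "(t - 2.56) * (4 - t) = 6.56 * t - 10.24 - t * t" by (simp add: algebra_simps divide_simps)
    ultimately have h: "t * t \<le> 6.56 * t - 10.24" by linarith
    have "(t - 2) * (1 + 1 * (4 - t)) = 7 * t - 10 - t * t" by (simp add: algebra_simps)
    then have "(t - 2) * (1 + 1 * (4 - t)) > 1" using h tl by (simp add: power2_eq_square)
    then show ?thesis using e m1 by linarith
  qed
  have f6: "f 6 < 0"
  proof -
    obtain m where m: "k = Suc m" using assms(1) by (cases k) auto
    have a: "chebS m 6 \<ge> 1" and b: "chebS k 6 - chebS m 6 \<ge> 1"
      using chebS_big[of 6 m] m by auto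
    have km: "k - 1 = m" using m by simp
    have A: "(6 + 2 - t) * chebS m 6 * (chebS k 6 - chebS m 6) \<ge> 0"
      using a b tu by simp
    have L: "(6 - 2) * (6 + 2 - t) * chebS k 6 * chebS m 6 \<ge> 0"
      using a b tu by simp
    have lam: "lambdaK k x 6 < 0" unfolding lambdaK_def km t_def[symmetric]
      using L tu by linarith
    have al: "alphaK k x 6 \<ge> 1" unfolding alphaK_def km t_def[symmetric] using A by linarith
    have "lambdaK k x 6 * alphaK k x 6 \<le> 0"
      using lam al by (simp add: mult_nonpos_nonneg)
    then show ?thesis unfolding f_def rileyJ_def by linarith
  qed
  have cont: "continuous_on {2..6} f"
    unfolding f_def rileyJ_def lambdaK_def alphaK_def
    by (intro continuous_intros chebS_cont)
  obtain y where y: "2 \<le> y" "y \<le> 6" "f y = 0"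
    using IVT2'[of f 6 0 2, OF _ _ _ cont] f2 f6 by force
  have "y \<noteq> 2" using y f2 by auto
  then have "y > 2" using y by linarith
  then show ?thesis using y unfolding f_def x_def by blast
qed

end
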